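(* Let $\alpha,\beta$ be real (or complex) parameters and let $n,k$ be non-negative integers. Let $\Omega_{n,k}$ be the set of all partitions of $\{1,\ldots,n\}$ into $k$ non-empty blocks, the blocks being unordered among themselves but each block being arranged as a linear list (sequence). For $\varepsilon\in\Omega_{n,k}$ define its weight $w(\varepsilon)$ as the product over all elements $e\in\{1,\ldots,n\}$ of the weight of $e$, where an element $e$ has weight $1$ if $e$ is the smallest element of its list, weight $\beta$ if $e$ is not the smallest element of its list but appears in the list before every element of its list that is smaller than $e$, and weight $\alpha$ otherwise. (Equivalently, the lists are built by inserting $1,2,\ldots,n$ one at a time: starting a new list costs $1$, inserting at the head of an existing list costs $\beta$, inserting immediately after an already placed element costs $\alpha$.) Then $$\genfrac{\lfloor}{\rfloor}{0pt}{}{n}{k}^{\alpha,\beta}=\sum_{\varepsilon\in\Omega_{n,k}} w(\varepsilon).$$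
   Context: For parameters $\alpha,\beta$, the generalized Stirling (Lah-type) numbers $\genfrac{\lfloor}{\rfloor}{0pt}{}{n}{k}^{\alpha,\beta}$, $0\le k\le n$, are defined by the polynomial identity in $x$ $$x(x+\alpha)(x+2\alpha)\cdots(x+(n-1)\alpha)=\sum_{k=0}^{n}\genfrac{\lfloor}{\rfloor}{0pt}{}{n}{k}^{\alpha,\beta}\,x(x-\beta)(x-2\beta)\cdots(x-(k-1)\beta),$$ (empty products equal $1$), and $\genfrac{\lfloor}{\rfloor}{0pt}{}{n}{k}^{\alpha,\beta}=0$ for $k<0$ or $k>n$. In particular $\genfrac{\lfloor}{\rfloor}{0pt}{}{0}{0}^{\alpha,\beta}=1$ and $\genfrac{\lfloor}{\rfloor}{0pt}{}{n}{0}^{\alpha,\beta}=0$ for $n\ge1$. *)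

theory Defs
  imports Complex_Main
begin

definition rising_prod :: "complex \<Rightarrow> nat \<Rightarrow> complex \<Rightarrow> complex" where
  "rising_prod a n x = (\<Prod>i<n. x + of_nat i * a)"

definition falling_prod :: "complex \<Rightarrow> nat \<Rightarrow> complex \<Rightarrow> complex" where
  "falling_prod b k x = (\<Prod>i<k. x - of_nat i * b)"

definition gen_stirling :: "complex \<Rightarrow> complex \<Rightarrow> nat \<Rightarrow> nat \<Rightarrow> complex" where
  "gen_stirling a b n k =
     (if k \<le> n then
        (THE c :: nat \<Rightarrow> complex.
            (\<forall>x. rising_prod a n x = (\<Sum>j\<le>n. c j * falling_prod b j x)) \<and>
            (\<forall>j>n. c j = 0)) k
      else 0)"

text \<open>Partitions of {1..n} into k nonempty blocks, each block a linear list
  (a set of lists; the lists are unordered among themselves).\<close>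
definition Omega :: "nat \<Rightarrow> nat \<Rightarrow> nat list set set" where
  "Omega n k = {L. finite L \<and> card L = k \<and>
      (\<forall>l\<in>L. l \<noteq> [] \<and> distinct l) \<and>
      (\<forall>l\<in>L. \<forall>m\<in>L. l \<noteq> m \<longrightarrow> set l \<inter> set m = {}) \<and>
      (\<Union>l\<in>L. set l) = {1..n}}"

definition elem_weight :: "complex \<Rightarrow> complex \<Rightarrow> nat list \<Rightarrow> nat \<Rightarrow> complex" where
  "elem_weight a b l i =
     (if l ! i = Min (set l) then 1
      else if (\<forall>j<i. l ! i < l ! j) then b
      else a)"

definition weight :: "complex \<Rightarrow> complex \<Rightarrow> nat list set \<Rightarrow> complex" where
  "weight a b L = (\<Prod>l\<in>L. \<Prod>i<length l. elem_weight a b l i)"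

end

theory Submission
  imports Defs "HOL-Computational_Algebra.Polynomial"
begin


definition FP :: "complex \<Rightarrow> nat \<Rightarrow> complex poly" where
  "FP b j = (\<Prod>i<j. [:- of_nat i * b, 1:])"

lemma poly_FP: "poly (FP b j) x = falling_prod b j x"
  by (simp add: FP_def falling_prod_def poly_prod)

lemma degree_FP: "degree (FP b j) = j"
proof -
  have "degree (FP b j) = (\<Sum>i<j. degree [:- of_nat i * b, (1::complex):])"
    unfolding FP_def by (rule degree_prod_sum_eq) simp
  then show ?thesis by simp
qed

lemma lc_FP: "lead_coeff (FP b j) = 1"
  unfolding FP_def lead_coeff_prod by simp

lemma indep:
  "(\<forall>x. (\<Sum>j\<le>n. e j * falling_prod b j x) = 0) \<Longrightarrow> j \<le> n \<Longrightarrow> e j = 0"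
proof (induction n arbitrary: j)
  case 0
  then show ?case by (simp add: falling_prod_def)
next
  case (Suc n)
  let ?p = "\<Sum>j\<le>Suc n. smult (e j) (FP b j)"
  have "\<forall>x. poly ?p x = 0" using Suc.prems(1) by (simp add: poly_sum poly_FP)
  hence p0: "?p = 0" by (metis poly_all_0_iff_0)
  have "coeff ?p (Suc n) = (\<Sum>j\<le>Suc n. e j * coeff (FP b j) (Suc n))"
    by (simp add: coeff_sum)
  also have "\<dots> = e (Suc n)"
  proof -
    have "(\<Sum>j\<le>Suc n. e j * coeff (FP b j) (Suc n)) = (\<Sum>j\<le>n. e j * coeff (FP b j) (Suc n)) + e (Suc n) * coeff (FP b (Suc n)) (Suc n)"
      by simp
    moreover have "\<And>j. j \<le> n \<Longrightarrow> coeff (FP b j) (Suc n) = 0"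
      by (rule coeff_eq_0) (simp add: degree_FP)
    moreover have "coeff (FP b (Suc n)) (Suc n) = 1" using lc_FP[of b "Suc n"] by (simp add: degree_FP)
    ultimately show ?thesis by simp
  qed
  finally have en: "e (Suc n) = 0" using p0 by (metis coeff_0)
  have "\<forall>x. (\<Sum>j\<le>n. e j * falling_prod b j x) = 0"
    using Suc.prems(1) en by simp
  then show ?case using Suc by (cases "j = Suc n") (auto simp: en)
qed



fun T :: "complex \<Rightarrow> complex \<Rightarrow> nat \<Rightarrow> nat \<Rightarrow> complex" where
  "T a b 0 k = (if k = 0 then 1 else 0)"
| "T a b (Suc n) 0 = 0"
| "T a b (Suc n) (Suc k) = T a b n k + (of_nat (Suc k) * b + of_nat n * a) * T a b n (Suc k)"

lemma T_big: "n < k \<Longrightarrow> T a b n k = 0"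
proof (induction n arbitrary: k)
  case 0 then show ?case by simp
next
  case (Suc n) then show ?case by (cases k) auto
qed

lemma T_expand: "rising_prod a n x = (\<Sum>j\<le>n. T a b n j * falling_prod b j x)"
proof (induction n)
  case 0 then show ?case by (simp add: rising_prod_def falling_prod_def)
next
  case (Suc n)
  have fs: "falling_prod b (Suc j) x = falling_prod b j x * (x - of_nat j * b)" for j
    by (simp add: falling_prod_def)
  have "rising_prod a (Suc n) x = rising_prod a n x * (x + of_nat n * a)"
    by (simp add: rising_prod_def)
  also have "\<dots> = (\<Sum>j\<le>n. T a b n j * falling_prod b (Suc j) x)
      + (\<Sum>j\<le>n. (of_nat j * b + of_nat n * a) * T a b n j * falling_prod b j x)"
    unfolding Suc sum_distrib_right sum.distrib[symmetric]
    by (rule sum.cong) (auto simp: fs algebra_simps)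
  also have "(\<Sum>j\<le>n. (of_nat j * b + of_nat n * a) * T a b n j * falling_prod b j x)
     = (\<Sum>j\<le>n. (of_nat (Suc j) * b + of_nat n * a) * T a b n (Suc j) * falling_prod b (Suc j) x)"
  proof -
    have "(\<Sum>j\<le>Suc n. (of_nat j * b + of_nat n * a) * T a b n j * falling_prod b j x)
      = (\<Sum>j\<le>n. (of_nat j * b + of_nat n * a) * T a b n j * falling_prod b j x)"
      by (simp add: T_big)
    moreover have "(\<Sum>j\<le>Suc n. (of_nat j * b + of_nat n * a) * T a b n j * falling_prod b j x)
      = (\<Sum>j\<le>n. (of_nat (Suc j) * b + of_nat n * a) * T a b n (Suc j) * falling_prod b (Suc j) x)"
      unfolding sum.atMost_Suc_shift by (cases n) auto
    ultimately show ?thesis by metis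
  qed
  also have "(\<Sum>j\<le>n. T a b n j * falling_prod b (Suc j) x) + \<dots>
     = (\<Sum>j\<le>Suc n. T a b (Suc n) j * falling_prod b j x)"
    unfolding sum.atMost_Suc_shift by (simp add: sum.distrib[symmetric] algebra_simps)
  finally show ?case .
qed

lemma gen_stirling_T: "gen_stirling a b n k = T a b n k"
proof -
  let ?P = "\<lambda>c :: nat \<Rightarrow> complex. (\<forall>x. rising_prod a n x = (\<Sum>j\<le>n. c j * falling_prod b j x)) \<and> (\<forall>j>n. c j = 0)"
  have "(THE c. ?P c) = T a b n"
  proof (rule the_equality)
    show "?P (T a b n)" using T_expand T_big by auto
  next
    fix c assume c: "?P c"
    have "\<forall>x. (\<Sum>j\<le>n. (c j - T a b n j) * falling_prod b j x) = 0"
      using c T_expand[of a n _ b] by (simp add: algebra_simps sum_subtractf)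
    then have "\<And>j. j \<le> n \<Longrightarrow> c j - T a b n j = 0" by (rule indep)
    then show "c = T a b n" using c T_big by (metis eq_iff_diff_eq_0 ext not_le)
  qed
  then show ?thesis by (simp add: gen_stirling_def T_big)
qed



definition h :: "complex \<Rightarrow> complex \<Rightarrow> nat \<Rightarrow> nat list \<Rightarrow> nat \<Rightarrow> complex" where
  "h a b m us x = (if x = m then 1 else if (\<forall>y\<in>set us. x < y) then b else a)"

fun F :: "complex \<Rightarrow> complex \<Rightarrow> nat \<Rightarrow> nat list \<Rightarrow> nat list \<Rightarrow> complex" where
  "F a b m us [] = 1"
| "F a b m us (x # vs) = h a b m us x * F a b m (us @ [x]) vs"

lemma ew_h: "i < length l \<Longrightarrow> elem_weight a b l i = h a b (Min (set l)) (take i l) (l ! i)"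
proof -
  assume i: "i < length l"
  have "(\<forall>j<i. l ! i < l ! j) = (\<forall>y\<in>set (take i l). l ! i < y)"
    using i by (auto simp: set_conv_nth)
  then show ?thesis by (simp add: elem_weight_def h_def)
qed

lemma prodF: "(\<Prod>i<length vs. h a b m (us @ take i vs) (vs ! i)) = F a b m us vs"
proof (induction vs arbitrary: us)
  case Nil then show ?case by simp
next
  case (Cons x vs)
  show ?case
    using Cons.IH[of "us @ [x]"] by (simp add: prod.lessThan_Suc_shift del: prod.lessThan_Suc)
qed

lemma wl_F: "(\<Prod>i<length l. elem_weight a b l i) = F a b (Min (set l)) [] l"
  using prodF[of a b "Min (set l)" "[]" l] by (simp add: ew_h)

lemma F_append: "F a b m us (xs @ ys) = F a b m us xs * F a b m (us @ xs) ys"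
  by (induction xs arbitrary: us) auto

lemma F_ins_big:
  "set us' = insert N (set us) \<Longrightarrow> \<forall>x\<in>set ys. x < N \<Longrightarrow> F a b m us' ys = F a b m us ys"
proof (induction ys arbitrary: us us')
  case Nil then show ?case by simp
next
  case (Cons x ys)
  have "h a b m us' x = h a b m us x" using Cons.prems by (auto simp: h_def)
  moreover have "F a b m (us' @ [x]) ys = F a b m (us @ [x]) ys"
    using Cons by (intro Cons.IH) auto
  ultimately show ?case by simp
qed

definition ins :: "nat \<Rightarrow> nat \<Rightarrow> nat list \<Rightarrow> nat list" where
  "ins N p l = take p l @ N # drop p l"

lemma F_ins:
  assumes "\<forall>x\<in>set l. x < N"
  shows "F a b m [] (ins N p l) = h a b m (take p l) N * F a b m [] l"
proof -
  have "F a b m [] (ins N p l) = F a b m [] (take p l) * (h a b m (take p l) N * F a b m (take p l @ [N]) (drop p l))"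
    by (simp add: ins_def F_append)
  also have "F a b m (take p l @ [N]) (drop p l) = F a b m (take p l) (drop p l)"
    using assms by (intro F_ins_big) (auto dest: in_set_dropD)
  finally show ?thesis
    using F_append[of a b m "[]" "take p l" "drop p l"] by simp
qed

lemma wl_ins:
  assumes "\<forall>x\<in>set l. x < N" "l \<noteq> []" "p \<le> length l"
  shows "(\<Prod>i<length (ins N p l). elem_weight a b (ins N p l) i)
       = (if p = 0 then b else a) * (\<Prod>i<length l. elem_weight a b l i)"
proof -
  have s: "set (ins N p l) = insert N (set l)"
    unfolding ins_def by (metis append_take_drop_id set_append set_simps(2) Un_insert_right Un_commute insert_is_Un)
  have mlt: "Min (set l) < N" using assms by simp
  have M: "Min (set (ins N p l)) = Min (set l)"
    unfolding s using assms mlt by (auto simp: min_def) (metis last_in_set leD)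
  have "h a b (Min (set l)) (take p l) N = (if p = 0 then b else a)"
  proof (cases "p = 0")
    case True then show ?thesis using mlt by (simp add: h_def)
  next
    case False
    then have "l ! 0 \<in> set (take p l)" using assms by (cases l; cases p) auto
    moreover have "l ! 0 < N" using assms by simp
    ultimately show ?thesis using False mlt by (auto simp: h_def)
  qed
  then show ?thesis unfolding wl_F M using F_ins[OF assms(1)] by simp
qed

lemma wl_single: "(\<Prod>i<length [N]. elem_weight a b [N] i) = 1"
  by (simp add: elem_weight_def)



lemma set_ins: "set (ins N p l) = insert N (set l)"
  unfolding ins_def by (metis append_take_drop_id set_append set_simps(2) Un_insert_right Un_commute insert_is_Un)

lemma length_ins: "p \<le> length l \<Longrightarrow> length (ins N p l) = Suc (length l)"
  by (simp add: ins_def)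

lemma OmegaD:
  assumes "L \<in> Omega n k"
  shows "finite L" "card L = k" "\<And>l. l \<in> L \<Longrightarrow> l \<noteq> [] \<and> distinct l"
    "\<And>l m. l \<in> L \<Longrightarrow> m \<in> L \<Longrightarrow> l \<noteq> m \<Longrightarrow> set l \<inter> set m = {}"
    "(\<Union>l\<in>L. set l) = {1..n}"
  using assms by (auto simp: Omega_def)

lemma OmegaI:
  "finite L \<Longrightarrow> card L = k \<Longrightarrow> (\<And>l. l \<in> L \<Longrightarrow> l \<noteq> [] \<and> distinct l) \<Longrightarrow>
   (\<And>l m. l \<in> L \<Longrightarrow> m \<in> L \<Longrightarrow> l \<noteq> m \<Longrightarrow> set l \<inter> set m = {}) \<Longrightarrow>
   (\<Union>l\<in>L. set l) = {1..n} \<Longrightarrow> L \<in> Omega n k"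
  by (auto simp: Omega_def)

lemma Omega_0: "Omega 0 k = (if k = 0 then {{}} else {})"
proof -
  have "L \<in> Omega 0 k \<longleftrightarrow> L = {} \<and> k = 0" for L
  proof
    assume a: "L \<in> Omega 0 k"
    have "L = {}"
    proof (rule ccontr)
      assume "L \<noteq> {}" then obtain l where "l \<in> L" by auto
      then show False using OmegaD[OF a] by (cases l) auto
    qed
    then show "L = {} \<and> k = 0" using OmegaD(2)[OF a] by simp
  qed (auto simp: Omega_def)
  then show ?thesis by auto
qed

lemma Omega_Suc_0: "Omega (Suc n) 0 = {}"
  by (auto simp: Omega_def)

lemma finite_Omega: "finite (Omega n k)"
proof -
  have "Omega n k \<subseteq> Pow {l. set l \<subseteq> {1..n} \<and> length l \<le> n}"
  proof
    fix L assume a: "L \<in> Omega n k"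
    have "L \<subseteq> {l. set l \<subseteq> {1..n} \<and> length l \<le> n}"
    proof
      fix l assume l: "l \<in> L"
      have s: "set l \<subseteq> {1..n}" using OmegaD(5)[OF a] l by auto
      have "length l = card (set l)" using OmegaD(3)[OF a l] by (simp add: distinct_card)
      also have "\<dots> \<le> n" using card_mono[OF _ s] by simp
      finally show "l \<in> {l. set l \<subseteq> {1..n} \<and> length l \<le> n}" using s by simp
    qed
    then show "L \<in> Pow {l. set l \<subseteq> {1..n} \<and> length l \<le> n}" by simp
  qed
  moreover have "finite {l. set l \<subseteq> {1..n} \<and> length l \<le> n}"
    by (rule finite_lists_length_le) simp
  ultimately show ?thesis by (meson finite_Pow_iff finite_subset)
qed

lemma sum_len: assumes "L \<in> Omega n k" shows "(\<Sum>l\<in>L. length l) = n"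
proof -
  have "card (\<Union>l\<in>L. set l) = (\<Sum>l\<in>L. card (set l))"
    using OmegaD[OF assms] by (intro card_UN_disjoint) auto
  also have "\<dots> = (\<Sum>l\<in>L. length l)"
    using OmegaD(3)[OF assms] by (intro sum.cong) (auto simp: distinct_card)
  finally show ?thesis using OmegaD(5)[OF assms] by simp
qed

lemma Omega_lt: assumes "L \<in> Omega n k" "l \<in> L" "x \<in> set l" shows "x < Suc n"
proof -
  have "x \<in> (\<Union>l\<in>L. set l)" using assms(2,3) by blast
  then show ?thesis using OmegaD(5)[OF assms(1)] by auto
qed

lemma phi1_mem:
  assumes a: "L \<in> Omega n k"
  shows "insert [Suc n] L \<in> Omega (Suc n) (Suc k)"
proof -
  have lt: "\<forall>x\<in>L. Suc n \<notin> set x" using Omega_lt[OF a] by blast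
  have nin: "[Suc n] \<notin> L" using lt by auto
  show ?thesis
  proof (rule OmegaI)
    show "finite (insert [Suc n] L)" using OmegaD(1)[OF a] by simp
    show "card (insert [Suc n] L) = Suc k" using OmegaD(1,2)[OF a] nin by simp
    show "l \<in> insert [Suc n] L \<Longrightarrow> l \<noteq> [] \<and> distinct l" for l using OmegaD(3)[OF a] by auto
    show "l \<in> insert [Suc n] L \<Longrightarrow> m \<in> insert [Suc n] L \<Longrightarrow> l \<noteq> m \<Longrightarrow> set l \<inter> set m = {}" for l m
      using OmegaD(4)[OF a] lt by auto
    show "(\<Union>l\<in>insert [Suc n] L. set l) = {1..Suc n}" using OmegaD(5)[OF a] by auto
  qed
qed

lemma phi2_mem:
  assumes a: "L \<in> Omega n k" and l: "l \<in> L" and p: "p \<le> length l"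
  shows "insert (ins (Suc n) p l) (L - {l}) \<in> Omega (Suc n) k"
proof -
  have lt: "\<And>m x. m \<in> L \<Longrightarrow> x \<in> set m \<Longrightarrow> x < Suc n" using Omega_lt[OF a] .
  have lt': "\<And>m. m \<in> L \<Longrightarrow> Suc n \<notin> set m" using Omega_lt[OF a] by (metis less_irrefl)
  have nin: "ins (Suc n) p l \<notin> L - {l}"
  proof
    assume "ins (Suc n) p l \<in> L - {l}"
    moreover have "Suc n \<in> set (ins (Suc n) p l)" by (simp add: set_ins)
    ultimately show False using lt' by simp
  qed
  have dl: "l \<noteq> [] \<and> distinct l" using OmegaD(3)[OF a l] .
  have di: "distinct (ins (Suc n) p l)"
  proof -
    have "Suc n \<notin> set l" using lt'[OF l] .
    then have "Suc n \<notin> set (take p l)" "Suc n \<notin> set (drop p l)" by (auto dest: in_set_takeD in_set_dropD)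
    moreover have "set (take p l) \<inter> set (drop p l) = {}" using dl set_take_disj_set_drop_if_distinct by blast
    ultimately show ?thesis using dl unfolding ins_def by simp
  qed
  show ?thesis
  proof (rule OmegaI)
    show "finite (insert (ins (Suc n) p l) (L - {l}))" using OmegaD(1)[OF a] by simp
    have "card L \<noteq> 0" using OmegaD(1)[OF a] l by auto
    then show "card (insert (ins (Suc n) p l) (L - {l})) = k" using OmegaD(1,2)[OF a] nin l
      by (simp add: card_Diff_singleton)
    show "m \<noteq> [] \<and> distinct m" if "m \<in> insert (ins (Suc n) p l) (L - {l})" for m using that
    proof (cases "m = ins (Suc n) p l")
      case True then show ?thesis using di by (simp add: ins_def)
    next
      case False then show ?thesis using OmegaD(3)[OF a, of m] that by simp
    qed
    show "m \<in> insert (ins (Suc n) p l) (L - {l}) \<Longrightarrow> m' \<in> insert (ins (Suc n) p l) (L - {l}) \<Longrightarrow> m \<noteq> m' \<Longrightarrow> set m \<inter> set m' = {}" for m m'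
    proof -
      assume m: "m \<in> insert (ins (Suc n) p l) (L - {l})" and m': "m' \<in> insert (ins (Suc n) p l) (L - {l})" and ne: "m \<noteq> m'"
      have D: "x \<in> L - {l} \<Longrightarrow> set x \<inter> set (ins (Suc n) p l) = {}" for x
        using OmegaD(4)[OF a, of x l] l lt'[of x] by (auto simp: set_ins)
      show ?thesis
      proof (cases "m = ins (Suc n) p l")
        case True then show ?thesis using m' ne D by auto
      next
        case False
        then have mL: "m \<in> L - {l}" using m by simp
        show ?thesis
        proof (cases "m' = ins (Suc n) p l")
          case True then show ?thesis using mL D by auto
        next
          case False then show ?thesis using m' mL ne OmegaD(4)[OF a] by auto
        qed
      qed
    qed
    show "(\<Union>m\<in>insert (ins (Suc n) p l) (L - {l}). set m) = {1..Suc n}"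
    proof -
      have "(\<Union>m\<in>insert (ins (Suc n) p l) (L - {l}). set m) = insert (Suc n) (\<Union>m\<in>L. set m)"
        using l by (auto simp: set_ins)
      then show ?thesis using OmegaD(5)[OF a] by auto
    qed
  qed
qed



definition BB :: "nat \<Rightarrow> nat \<Rightarrow> (nat list set \<times> nat list \<times> nat) set" where
  "BB n k = Sigma (Omega n k) (\<lambda>L. Sigma L (\<lambda>l. {..length l}))"

definition phi2 :: "nat \<Rightarrow> nat list set \<times> nat list \<times> nat \<Rightarrow> nat list set" where
  "phi2 n x = (case x of (L, l, p) \<Rightarrow> insert (ins (Suc n) p l) (L - {l}))"

lemma Union_minus:
  assumes "\<And>l m. l \<in> L \<Longrightarrow> m \<in> L \<Longrightarrow> l \<noteq> m \<Longrightarrow> set l \<inter> set m = {}" "l0 \<in> L"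
  shows "(\<Union>l\<in>L - {l0}. set l) = (\<Union>l\<in>L. set l) - set l0"
  using assms by blast

lemma decomp:
  assumes a: "L' \<in> Omega (Suc n) (Suc k)"
  shows "L' \<in> insert [Suc n] ` Omega n k \<union> phi2 n ` BB n (Suc k)"
proof -
  note D = OmegaD[OF a]
  obtain l0 where l0: "l0 \<in> L'" "Suc n \<in> set l0" proof -
    have "Suc n \<in> (\<Union>l\<in>L'. set l)" using D(5) by simp
    then show ?thesis using that by blast
  qed
  have others: "m \<in> L' - {l0} \<Longrightarrow> Suc n \<notin> set m" for m using D(4)[of m l0] l0 by auto
  have UM: "(\<Union>l\<in>L' - {l0}. set l) = {1..Suc n} - set l0" using Union_minus[OF D(4) l0(1)] D(5) by simp
  have cardm: "card (L' - {l0}) = k" using D(1,2) l0 by (simp add: card_Diff_singleton)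
  show ?thesis
  proof (cases "l0 = [Suc n]")
    case True
    have "L' - {l0} \<in> Omega n k"
    proof (rule OmegaI)
      show "finite (L' - {l0})" using D(1) by simp
      show "card (L' - {l0}) = k" by (rule cardm)
      show "l \<in> L' - {l0} \<Longrightarrow> l \<noteq> [] \<and> distinct l" for l using D(3) by auto
      show "l \<in> L' - {l0} \<Longrightarrow> m \<in> L' - {l0} \<Longrightarrow> l \<noteq> m \<Longrightarrow> set l \<inter> set m = {}" for l m using D(4) by auto
      show "(\<Union>l\<in>L' - {l0}. set l) = {1..n}" using UM True by auto
    qed
    moreover have "L' = insert [Suc n] (L' - {l0})" using True l0 by auto
    ultimately show ?thesis by blast
  next
    case False
    obtain xs ys where xy: "l0 = xs @ Suc n # ys" using l0(2) by (meson split_list)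
    define l where "l = xs @ ys"
    have dl0: "distinct l0" using D(3) l0 by auto
    have lne: "l \<noteq> []" using False xy l_def by auto
    have sl: "set l = set l0 - {Suc n}" using dl0 xy l_def by auto
    have ins: "ins (Suc n) (length xs) l = l0" using xy l_def by (simp add: ins_def)
    have lnin: "l \<notin> L' - {l0}"
    proof
      assume "l \<in> L' - {l0}"
      then have "set l \<inter> set l0 = {}" using D(4) l0 by auto
      moreover have "set l \<subseteq> set l0" using sl by auto
      ultimately have "set l = {}" by (simp add: Int_absorb2)
      then show False using lne by simp
    qed
    define L where "L = insert l (L' - {l0})"
    have LO: "L \<in> Omega n (Suc k)"
    proof (rule OmegaI)
      show "finite L" using D(1) L_def by simp
      show "card L = Suc k" using D(1) cardm lnin L_def by simp
      show "m \<in> L \<Longrightarrow> m \<noteq> [] \<and> distinct m" for m using D(3) lne dl0 xy l_def L_def by auto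
      show "m \<in> L \<Longrightarrow> m' \<in> L \<Longrightarrow> m \<noteq> m' \<Longrightarrow> set m \<inter> set m' = {}" for m m'
      proof -
        assume m: "m \<in> L" and m': "m' \<in> L" and ne: "m \<noteq> m'"
        have E: "x \<in> L' - {l0} \<Longrightarrow> set x \<inter> set l = {}" for x using D(4)[of x l0] l0 sl by auto
        show ?thesis
        proof (cases "m = l")
          case True then show ?thesis using E m' ne L_def by auto
        next
          case False
          then have mL: "m \<in> L' - {l0}" using m L_def by simp
          show ?thesis
          proof (cases "m' = l")
            case True then show ?thesis using mL E by auto
          next
            case False then show ?thesis using m' mL ne D(4) L_def by auto
          qed
        qed
      qed
      show "(\<Union>m\<in>L. set m) = {1..n}"
      proof -
        have "(\<Union>m\<in>L. set m) = set l \<union> ({1..Suc n} - set l0)" using UM L_def by auto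
        also have "\<dots> = {1..Suc n} - {Suc n}" using sl l0(2) D(5) l0(1) by auto
        finally show ?thesis by auto
      qed
    qed
    have "length xs \<le> length l" using l_def by simp
    then have "(L, l, length xs) \<in> BB n (Suc k)" using LO L_def by (simp add: BB_def)
    moreover have "phi2 n (L, l, length xs) = L'"
    proof -
      have "L - {l} = L' - {l0}" using lnin L_def by auto
      then show ?thesis using ins l0(1) by (auto simp: phi2_def)
    qed
    ultimately show ?thesis by (metis UnI2 image_eqI)
  qed
qed



lemma Omega_nin: "L \<in> Omega n k \<Longrightarrow> m \<in> L \<Longrightarrow> Suc n \<notin> set m"
  using Omega_lt by (metis less_irrefl)

lemma images_sub:
  "insert [Suc n] ` Omega n k \<union> phi2 n ` BB n (Suc k) \<subseteq> Omega (Suc n) (Suc k)"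
proof
  fix X assume "X \<in> insert [Suc n] ` Omega n k \<union> phi2 n ` BB n (Suc k)"
  then show "X \<in> Omega (Suc n) (Suc k)"
  proof
    assume "X \<in> insert [Suc n] ` Omega n k"
    then obtain L where "L \<in> Omega n k" "X = insert [Suc n] L" by blast
    then show ?thesis using phi1_mem by simp
  next
    assume "X \<in> phi2 n ` BB n (Suc k)"
    then obtain y where y: "y \<in> BB n (Suc k)" "X = phi2 n y" by blast
    obtain L l p where "y = (L, l, p)" by (cases y)
    then show ?thesis using y phi2_mem[of L n "Suc k" l p] by (simp add: BB_def phi2_def)
  qed
qed

lemma images_disj:
  "insert [Suc n] ` Omega n k \<inter> phi2 n ` BB n (Suc k) = {}"
proof -
  have "[Suc n] \<notin> phi2 n x" if xB: "x \<in> BB n (Suc k)" for x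
  proof -
    obtain L l p where x: "x = (L, l, p)" "L \<in> Omega n (Suc k)" "l \<in> L" "p \<le> length l"
      using xB by (cases x) (auto simp: BB_def)
    have "ins (Suc n) p l \<noteq> [Suc n]"
    proof
      assume "ins (Suc n) p l = [Suc n]"
      then have "length l = 0" using length_ins[OF x(4), of "Suc n"] by simp
      then show False using OmegaD(3)[OF x(2,3)] by simp
    qed
    moreover have "[Suc n] \<notin> L" using Omega_nin[OF x(2), of "[Suc n]"] by auto
    ultimately show ?thesis using x by (simp add: phi2_def)
  qed
  then show ?thesis by auto
qed

lemma inj_phi2: "inj_on (phi2 n) (BB n k)"
proof (rule inj_onI)
  fix x y assume x: "x \<in> BB n k" and y: "y \<in> BB n k" and eq: "phi2 n x = phi2 n y"
  obtain L1 l1 p1 where x': "x = (L1, l1, p1)" "L1 \<in> Omega n k" "l1 \<in> L1" "p1 \<le> length l1"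
    using x by (cases x) (auto simp: BB_def)
  obtain L2 l2 p2 where y': "y = (L2, l2, p2)" "L2 \<in> Omega n k" "l2 \<in> L2" "p2 \<le> length l2"
    using y by (cases y) (auto simp: BB_def)
  let ?i1 = "ins (Suc n) p1 l1" and ?i2 = "ins (Suc n) p2 l2"
  have E: "insert ?i1 (L1 - {l1}) = insert ?i2 (L2 - {l2})" using eq x' y' by (simp add: phi2_def)
  have n1: "?i1 \<notin> L1 - {l1}" using Omega_nin[OF x'(2), of ?i1] by (auto simp: set_ins)
  have n2: "?i2 \<notin> L2 - {l2}" using Omega_nin[OF y'(2), of ?i2] by (auto simp: set_ins)
  have ii: "?i1 = ?i2"
  proof (rule ccontr)
    assume "?i1 \<noteq> ?i2"
    then have "?i1 \<in> L2 - {l2}" using E by blast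
    then show False using Omega_nin[OF y'(2), of ?i1] by (auto simp: set_ins)
  qed
  have nn1: "Suc n \<notin> set (take p1 l1)" "Suc n \<notin> set (drop p1 l1)"
    using Omega_nin[OF x'(2) x'(3)] by (auto dest: in_set_takeD in_set_dropD)
  have "take p1 l1 = take p2 l2 \<and> drop p1 l1 = drop p2 l2"
  proof -
    have "take p1 l1 @ Suc n # drop p1 l1 = take p2 l2 @ Suc n # drop p2 l2" using ii by (simp add: ins_def)
    then show ?thesis by (simp only: append_Cons_eq_iff[OF nn1])
  qed
  then have td: "take p1 l1 = take p2 l2" "drop p1 l1 = drop p2 l2" by auto
  have ll: "l1 = l2" using td by (metis append_take_drop_id)
  have "p1 = length (take p1 l1)" using x'(4) by simp
  also have "\<dots> = length (take p2 l2)" using td by simp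
  also have "\<dots> = p2" using y'(4) by simp
  finally have pp: "p1 = p2" .
  have "L1 - {l1} = L2 - {l2}"
  proof -
    have "L1 - {l1} = insert ?i1 (L1 - {l1}) - {?i1}" using n1 by auto
    also have "\<dots> = insert ?i2 (L2 - {l2}) - {?i2}" using E ii by simp
    also have "\<dots> = L2 - {l2}" using n2 by auto
    finally show ?thesis .
  qed
  then have "insert l1 (L1 - {l1}) = insert l2 (L2 - {l2})" using ll by simp
  then have "L1 = L2" using x'(3) y'(3) by (simp add: insert_absorb)
  then show "x = y" using x' y' ll pp by simp
qed

lemma inj_phi1: "inj_on (insert [Suc n]) (Omega n k)"
proof (rule inj_onI)
  fix L1 L2 assume a: "L1 \<in> Omega n k" "L2 \<in> Omega n k" "insert [Suc n] L1 = insert [Suc n] L2"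
  have "[Suc n] \<notin> L1" "[Suc n] \<notin> L2" using Omega_nin[OF a(1), of "[Suc n]"] Omega_nin[OF a(2), of "[Suc n]"] by auto
  then show "L1 = L2" using a(3) by (metis insert_ident)
qed



lemma sum_c: "(\<Sum>p\<le>m. (if p = 0 then b else a)) = b + of_nat m * (a::complex)"
  by (induction m) (auto simp: algebra_simps)

lemma weight_phi1:
  assumes "L \<in> Omega n k" shows "weight a b (insert [Suc n] L) = weight a b L"
proof -
  have "[Suc n] \<notin> L" using Omega_nin[OF assms, of "[Suc n]"] by auto
  then show ?thesis using OmegaD(1)[OF assms] wl_single[of a b "Suc n"]
    by (simp add: weight_def del: length_Cons)
qed

lemma weight_phi2:
  assumes a: "L \<in> Omega n k" and l: "l \<in> L" and p: "p \<le> length l"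
  shows "weight a b (insert (ins (Suc n) p l) (L - {l})) = (if p = 0 then b else a) * weight a b L"
proof -
  let ?w = "\<lambda>l. \<Prod>i<length l. elem_weight a b l i"
  have nin: "ins (Suc n) p l \<notin> L - {l}" using Omega_nin[OF a, of "ins (Suc n) p l"] by (auto simp: set_ins)
  have fin: "finite L" using OmegaD(1)[OF a] .
  have "weight a b (insert (ins (Suc n) p l) (L - {l})) = ?w (ins (Suc n) p l) * prod ?w (L - {l})"
    unfolding weight_def using nin fin by simp
  also have "?w (ins (Suc n) p l) = (if p = 0 then b else a) * ?w l"
    using wl_ins[of l "Suc n" p a b] Omega_lt[OF a l] OmegaD(3)[OF a l] p by blast
  also have "(if p = 0 then b else a) * ?w l * prod ?w (L - {l}) = (if p = 0 then b else a) * (?w l * prod ?w (L - {l}))"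
    by simp
  also have "?w l * prod ?w (L - {l}) = weight a b L"
    unfolding weight_def by (rule prod.remove[OF fin l, symmetric])
  finally show ?thesis .
qed

lemma S_rec:
  "(\<Sum>L\<in>Omega (Suc n) (Suc k). weight a b L) =
   (\<Sum>L\<in>Omega n k. weight a b L) + (of_nat (Suc k) * b + of_nat n * a) * (\<Sum>L\<in>Omega n (Suc k). weight a b L)"
proof -
  have eqset: "Omega (Suc n) (Suc k) = insert [Suc n] ` Omega n k \<union> phi2 n ` BB n (Suc k)"
  proof (rule equalityI)
    show "Omega (Suc n) (Suc k) \<subseteq> insert [Suc n] ` Omega n k \<union> phi2 n ` BB n (Suc k)"
      using decomp by (intro subsetI)
  qed (rule images_sub)
  have finB: "finite (BB n (Suc k))" unfolding BB_def
    using finite_Omega OmegaD(1) by (intro finite_SigmaI) auto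
  have "(\<Sum>L\<in>Omega (Suc n) (Suc k). weight a b L) =
     (\<Sum>L\<in>insert [Suc n] ` Omega n k. weight a b L) + (\<Sum>L\<in>phi2 n ` BB n (Suc k). weight a b L)"
    unfolding eqset using finite_Omega finB images_disj by (intro sum.union_disjoint) auto
  also have "(\<Sum>L\<in>insert [Suc n] ` Omega n k. weight a b L) = (\<Sum>L\<in>Omega n k. weight a b L)"
    using sum.reindex[OF inj_phi1, of "weight a b" n k] weight_phi1 by (simp add: o_def)
  also have "(\<Sum>L\<in>phi2 n ` BB n (Suc k). weight a b L) = (\<Sum>y\<in>BB n (Suc k). weight a b (phi2 n y))"
    using sum.reindex[OF inj_phi2, of "weight a b" n "Suc k"] by (simp add: o_def)
  also have "\<dots> = (\<Sum>y\<in>BB n (Suc k). (case y of (L, l, p) \<Rightarrow> (if p = 0 then b else a) * weight a b L))"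
    by (rule sum.cong) (auto simp: BB_def phi2_def weight_phi2)
  also have "\<dots> = (\<Sum>L\<in>Omega n (Suc k). \<Sum>(l, p)\<in>Sigma L (\<lambda>l. {..length l}). (if p = 0 then b else a) * weight a b L)"
    unfolding BB_def
    by (subst sum.Sigma[symmetric]) (auto simp: finite_Omega OmegaD(1) intro!: finite_SigmaI sum.cong)
  also have "\<dots> = (\<Sum>L\<in>Omega n (Suc k). (of_nat (Suc k) * b + of_nat n * a) * weight a b L)"
  proof (rule sum.cong[OF refl])
    fix L assume L: "L \<in> Omega n (Suc k)"
    have "(\<Sum>(l, p)\<in>Sigma L (\<lambda>l. {..length l}). (if p = 0 then b else a) * weight a b L)
        = (\<Sum>l\<in>L. \<Sum>p\<le>length l. (if p = 0 then b else a) * weight a b L)"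
      by (subst sum.Sigma[symmetric]) (auto simp: OmegaD(1)[OF L])
    also have "\<dots> = (\<Sum>l\<in>L. (b + of_nat (length l) * a) * weight a b L)"
      by (simp add: sum_distrib_right[symmetric] sum_c)
    also have "\<dots> = (of_nat (card L) * b + of_nat (\<Sum>l\<in>L. length l) * a) * weight a b L"
    proof -
      have "(\<Sum>l\<in>L. b + of_nat (length l) * a) = of_nat (card L) * b + of_nat (\<Sum>l\<in>L. length l) * a"
        by (simp add: sum.distrib of_nat_sum sum_distrib_right)
      then show ?thesis by (simp only: sum_distrib_right[symmetric])
    qed
    also have "\<dots> = (of_nat (Suc k) * b + of_nat n * a) * weight a b L"
      using OmegaD(2)[OF L] sum_len[OF L] by simp
    finally show "(\<Sum>(l, p)\<in>Sigma L (\<lambda>l. {..length l}). (if p = 0 then b else a) * weight a b L) =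
        (of_nat (Suc k) * b + of_nat n * a) * weight a b L" .
  qed
  also have "\<dots> = (of_nat (Suc k) * b + of_nat n * a) * (\<Sum>L\<in>Omega n (Suc k). weight a b L)"
    by (simp add: sum_distrib_left)
  finally show ?thesis .
qed


lemma S_eq_T: "(\<Sum>L\<in>Omega n k. weight a b L) = T a b n k"
proof (induction n arbitrary: k)
  case 0 then show ?case by (simp add: Omega_0 weight_def)
next
  case (Suc n)
  then show ?case
  proof (cases k)
    case 0 then show ?thesis by (simp add: Omega_Suc_0)
  next
    case (Suc k')
    then show ?thesis using S_rec[where n=n and k=k' and a=a and b=b] Suc.IH by simp
  qed
qed

theorem theorem1:
  fixes \<alpha> \<beta> :: complex and n k :: nat
  shows "gen_stirling \<alpha> \<beta> n k = (\<Sum>L\<in>Omega n k. weight \<alpha> \<beta> L)"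
  by (simp add: gen_stirling_T S_eq_T)

end
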